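(* Let $\Gamma$ be a countably infinite group acting minimally and continuously on a compact metrizable space $X$ with more than one orbit, let $x_1\in X$ have trivial stabilizer, and let $f:X\setminus\{x_1\}\to\{1,-1\}$ be continuous and not continuously extendable to $X$. Let $\pi_f:X_f\to X$ be the McMahon extension with continuous $\tilde f:X_f\to\{1,-1\}$, and put $X_{f,\pm}=\tilde f^{-1}(\pm1)$ and $X_\pm=f^{-1}(\pm1)$. Then $(X_{f,+},X_{f,-})$ has arbitrarily large finite independence sets if and only if $(X_+,X_-)$ has arbitrarily large finite independence sets.
   Context: McMahon extension: $\Gamma\curvearrowright X_f$ is a minimal continuous action on a compact metrizable space with a $\Gamma$-equivariant continuous surjection $\pi_f:X_f\to X$ such that $\pi_f^{-1}(x)$ is a single point for $x\notin\Gamma x_1$ and two points for $x\in\Gamma x_1$, and $\tilde f$ is the continuous extension to $X_f$ of $f\circ\pi_f$ on $X_f\setminus\pi_f^{-1}(x_1)$ (unique up to conjugacy). A set $M\subseteq\Gamma$ is an independence set for $(A_1,A_2)$ if $\bigcap_{s\in F}s^{-1}A_{\omega(s)}\ne\emptyset$ for every nonempty finite $F\subseteq M$ and every $\omega\in\{1,2\}^F$. *)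

theory Defs
  imports "HOL-Analysis.Analysis"
begin

text \<open>A continuous action of a group (written additively, class group_add,
  not assumed commutative) on a topological space.\<close>
definition cont_action :: "('g::group_add \<Rightarrow> 'x::topological_space \<Rightarrow> 'x) \<Rightarrow> bool" where
  "cont_action act \<longleftrightarrow>
     (\<forall>x. act 0 x = x) \<and>
     (\<forall>g h x. act (g + h) x = act g (act h x)) \<and>
     (\<forall>g. continuous_on UNIV (act g))"

definition orbit :: "('g \<Rightarrow> 'x \<Rightarrow> 'x) \<Rightarrow> 'x \<Rightarrow> 'x set" where
  "orbit act x = range (\<lambda>g. act g x)"

definition minimal_action :: "('g::group_add \<Rightarrow> 'x::topological_space \<Rightarrow> 'x) \<Rightarrow> bool" where
  "minimal_action act \<longleftrightarrow> cont_action act \<and> (\<forall>x. closure (orbit act x) = UNIV)"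

definition independence_set ::
  "('g \<Rightarrow> 'x \<Rightarrow> 'x) \<Rightarrow> 'x set \<Rightarrow> 'x set \<Rightarrow> 'g set \<Rightarrow> bool" where
  "independence_set act A1 A2 M \<longleftrightarrow>
     (\<forall>F \<omega>. F \<subseteq> M \<and> finite F \<and> F \<noteq> {} \<and> (\<forall>s\<in>F. \<omega> s \<in> {1::nat, 2}) \<longrightarrow>
        (\<Inter>s\<in>F. {x. act s x \<in> (if \<omega> s = 1 then A1 else A2)}) \<noteq> {})"

definition arb_large_finite_indep ::
  "('g \<Rightarrow> 'x \<Rightarrow> 'x) \<Rightarrow> 'x set \<Rightarrow> 'x set \<Rightarrow> bool" where
  "arb_large_finite_indep act A1 A2 \<longleftrightarrow>
     (\<forall>n::nat. \<exists>M. finite M \<and> card M \<ge> n \<and> independence_set act A1 A2 M)"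

end

theory Submission
  imports Defs
begin

theorem lemma3p3:
  fixes act :: "'g::group_add \<Rightarrow> 'x::metric_space \<Rightarrow> 'x"
    and actf :: "'g \<Rightarrow> 'y::metric_space \<Rightarrow> 'y"
    and x1 :: 'x
    and f :: "'x \<Rightarrow> real"
    and pif :: "'y \<Rightarrow> 'x"
    and ft :: "'y \<Rightarrow> real"
  assumes countable_G: "countable (UNIV :: 'g set)"
    and infinite_G: "infinite (UNIV :: 'g set)"
    and compact_X: "compact (UNIV :: 'x set)"
    and minimal_X: "minimal_action act"
    and more_orbits: "\<exists>x y. y \<notin> orbit act x"
    and free_x1: "\<And>g. act g x1 = x1 \<Longrightarrow> g = 0"
    and f_cont: "continuous_on (- {x1}) f"
    and f_vals: "\<And>x. x \<noteq> x1 \<Longrightarrow> f x \<in> {1, -1}"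
    and f_not_ext: "\<not> (\<exists>g. continuous_on UNIV g \<and> range g \<subseteq> {1, -1} \<and>
                          (\<forall>x. x \<noteq> x1 \<longrightarrow> g x = f x))"
    and compact_Xf: "compact (UNIV :: 'y set)"
    and minimal_Xf: "minimal_action actf"
    and pif_cont: "continuous_on UNIV pif"
    and pif_surj: "surj pif"
    and pif_equiv: "\<And>g y. pif (actf g y) = act g (pif y)"
    and pif_fib1: "\<And>x. x \<notin> orbit act x1 \<Longrightarrow> card (pif -` {x}) = 1"
    and pif_fib2: "\<And>x. x \<in> orbit act x1 \<Longrightarrow> card (pif -` {x}) = 2"
    and ft_cont: "continuous_on UNIV ft"
    and ft_vals: "range ft \<subseteq> {1, -1}"
    and ft_ext: "\<And>y. pif y \<noteq> x1 \<Longrightarrow> ft y = f (pif y)"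
  shows "arb_large_finite_indep actf (ft -` {1}) (ft -` {-1}) \<longleftrightarrow>
         arb_large_finite_indep act {x. x \<noteq> x1 \<and> f x = 1} {x. x \<noteq> x1 \<and> f x = -1}"
proof -
  have actf_laws: "\<And>x. actf 0 x = x" "\<And>g h x. actf (g + h) x = actf g (actf h x)"
      "\<And>g. continuous_on UNIV (actf g)"
    using minimal_Xf unfolding minimal_action_def cont_action_def by auto
  have act_laws: "\<And>x. act 0 x = x" "\<And>g h x. act (g + h) x = act g (act h x)"
    using minimal_X unfolding minimal_action_def cont_action_def by auto
  have dense_f: "\<And>z. closure (orbit actf z) = UNIV"
    using minimal_Xf unfolding minimal_action_def by auto
  have no_isol: "\<not> open {y0}" for y0 :: 'y
  proof
    assume op: "open {y0}"
    have allorb: "z \<in> orbit actf y0" for z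
    proof -
      have "y0 \<in> closure (orbit actf z)" using dense_f by auto
      then have "{y0} \<inter> orbit actf z \<noteq> {}"
        using op by (metis open_Int_closure_eq_empty inf_commute insert_disjoint(2) closure_empty empty_iff)
      then obtain g where g: "actf g z = y0" unfolding orbit_def by auto
      have "actf (-g) y0 = z" using g actf_laws by (metis add.left_inverse)
      then show ?thesis unfolding orbit_def by auto
    qed
    have "y \<in> orbit act x" for x y
    proof -
      obtain a where a: "pif a = x" using pif_surj by (metis surj_def)
      obtain b where b: "pif b = y" using pif_surj by (metis surj_def)
      obtain g where "a = actf g y0" using allorb[of a] unfolding orbit_def by auto
      then have xa: "x = act g (pif y0)" using a pif_equiv by simp
      obtain h where "b = actf h y0" using allorb[of b] unfolding orbit_def by auto
      then have yb: "y = act h (pif y0)" using b pif_equiv by simp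
      have "act (h + - g) x = y" using xa yb act_laws by (metis add.assoc add.left_inverse add_0_right)
      then show ?thesis unfolding orbit_def by auto
    qed
    then show False using more_orbits by auto
  qed
  have open_inf: "infinite U" if oU: "open U" "U \<noteq> {}" for U :: "'y set"
  proof
    assume fin: "finite U"
    obtain y where y: "y \<in> U" using oU(2) by blast
    have "closed (U - {y})" using fin by (simp add: finite_imp_closed)
    then have "open (U - (U - {y}))" using oU(1) by (simp add: open_Diff)
    moreover have "U - (U - {y}) = {y}" using y by auto
    ultimately show False using no_isol by auto
  qed
  have fibfin: "finite (pif -` {x})" for x
  proof (cases "x \<in> orbit act x1")
    case True then show ?thesis using pif_fib2 card.infinite by fastforce
  next
    case False then show ?thesis using pif_fib1 card.infinite by fastforce
  qed
  have finpre: "finite (pif -` S)" if "finite S" for S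
  proof -
    have "pif -` S = (\<Union>x\<in>S. pif -` {x})" by auto
    then show ?thesis using that fibfin by simp
  qed
  have open_pt: "open {y. ft (actf s y) = c}" if "c \<in> {1, -1}" for s c
  proof -
    have cont: "continuous_on UNIV (ft \<circ> actf s)"
      using actf_laws(3) ft_cont by (meson continuous_on_compose continuous_on_subset subset_UNIV)
    have "open ((ft \<circ> actf s) -` ball c 1)"
      using cont by (simp add: open_vimage)
    moreover have "(ft \<circ> actf s) -` ball c 1 = {y. ft (actf s y) = c}"
    proof (rule set_eqI, rule iffI)
      fix y assume a: "y \<in> (ft \<circ> actf s) -` ball c 1"
      have "ft (actf s y) \<in> {1, -1}" using ft_vals by auto
      with a that show "y \<in> {y. ft (actf s y) = c}" by (auto simp: dist_real_def)
    qed auto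
    ultimately show ?thesis by simp
  qed
  show ?thesis
  proof
    assume L: "arb_large_finite_indep actf (ft -` {1}) (ft -` {-1})"
    have "independence_set act {x. x \<noteq> x1 \<and> f x = 1} {x. x \<noteq> x1 \<and> f x = -1} M"
      if M: "independence_set actf (ft -` {1}) (ft -` {-1}) M" for M
      unfolding independence_set_def
    proof (intro allI impI)
      fix F \<omega> assume H: "F \<subseteq> M \<and> finite F \<and> F \<noteq> {} \<and> (\<forall>s\<in>F. \<omega> s \<in> {1::nat, 2})"
      define c where "c s = (if \<omega> s = 1 then 1 else (-1::real))" for s
      define U where "U = (\<Inter>s\<in>F. {y. ft (actf s y) = c s})"
      have Ueq: "U = (\<Inter>s\<in>F. {y. actf s y \<in> (if \<omega> s = 1 then ft -` {1} else ft -` {-1})})"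
        unfolding U_def c_def by (auto split: if_splits; metis vimage_singleton_eq)
      have "U \<noteq> {}" using M H unfolding Ueq independence_set_def by blast
      moreover have "open U" unfolding U_def using H open_pt by (auto simp: c_def intro!: open_INT)
      ultimately have "infinite U" using open_inf by auto
      moreover have "finite (pif -` ((\<lambda>s. act (-s) x1) ` F))" using H finpre by auto
      ultimately obtain y where y: "y \<in> U" "y \<notin> pif -` ((\<lambda>s. act (-s) x1) ` F)"
        by (metis Diff_iff finite_Diff2 finite.emptyI subsetI subset_antisym Diff_empty infinite_super)
      have ne: "act s (pif y) \<noteq> x1" if "s \<in> F" for s
      proof
        assume "act s (pif y) = x1"
        then have "act (-s) x1 = pif y" using act_laws by (metis add.left_inverse)
        then have "pif y \<in> (\<lambda>s. act (-s) x1) ` F" using that by (simp add: rev_image_eqI)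
        then show False using y(2) by simp
      qed
      have "pif y \<in> (\<Inter>s\<in>F. {x. act s x \<in> (if \<omega> s = 1 then {x. x \<noteq> x1 \<and> f x = 1} else {x. x \<noteq> x1 \<and> f x = -1})})"
      proof safe
        fix s assume s: "s \<in> F"
        have "ft (actf s y) = c s" using y(1) s unfolding U_def by auto
        moreover have "ft (actf s y) = f (act s (pif y))" using ft_ext pif_equiv ne s by metis
        ultimately show "act s (pif y) \<in> (if \<omega> s = 1 then {x. x \<noteq> x1 \<and> f x = 1} else {x. x \<noteq> x1 \<and> f x = -1})"
          using ne s by (auto simp: c_def)
      qed
      then show "(\<Inter>s\<in>F. {x. act s x \<in> (if \<omega> s = 1 then {x. x \<noteq> x1 \<and> f x = 1} else {x. x \<noteq> x1 \<and> f x = -1})}) \<noteq> {}"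
        by blast
    qed
    then show "arb_large_finite_indep act {x. x \<noteq> x1 \<and> f x = 1} {x. x \<noteq> x1 \<and> f x = -1}"
      using L unfolding arb_large_finite_indep_def by meson
  next
    assume R: "arb_large_finite_indep act {x. x \<noteq> x1 \<and> f x = 1} {x. x \<noteq> x1 \<and> f x = -1}"
    have "independence_set actf (ft -` {1}) (ft -` {-1}) M"
      if M: "independence_set act {x. x \<noteq> x1 \<and> f x = 1} {x. x \<noteq> x1 \<and> f x = -1} M" for M
      unfolding independence_set_def
    proof (intro allI impI)
      fix F \<omega> assume H: "F \<subseteq> M \<and> finite F \<and> F \<noteq> {} \<and> (\<forall>s\<in>F. \<omega> s \<in> {1::nat, 2})"
      obtain x where x: "x \<in> (\<Inter>s\<in>F. {x. act s x \<in> (if \<omega> s = 1 then {x. x \<noteq> x1 \<and> f x = 1} else {x. x \<noteq> x1 \<and> f x = -1})})"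
        using M H unfolding independence_set_def by blast
      obtain y where y: "pif y = x" using pif_surj by (metis surj_def)
      have "y \<in> (\<Inter>s\<in>F. {y. actf s y \<in> (if \<omega> s = 1 then ft -` {1} else ft -` {-1})})"
      proof safe
        fix s assume s: "s \<in> F"
        have A: "act s x \<noteq> x1" "f (act s x) = (if \<omega> s = 1 then 1 else -1)"
          using x s by (auto split: if_splits)
        have "ft (actf s y) = f (act s x)" using ft_ext pif_equiv y A(1) by metis
        then show "actf s y \<in> (if \<omega> s = 1 then ft -` {1} else ft -` {-1})" using A by auto
      qed
      then show "(\<Inter>s\<in>F. {y. actf s y \<in> (if \<omega> s = 1 then ft -` {1} else ft -` {-1})}) \<noteq> {}" by blast
    qed
    then show "arb_large_finite_indep actf (ft -` {1}) (ft -` {-1})"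
      using R unfolding arb_large_finite_indep_def by meson
  qed
qed

end
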